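(* Let $N\in\mathbb N$ and $1<p\le\pi^2(N+1/2)^2-1$. Then for every $x\in\mathbb R$, \[\sum_{n\in\mathbb Z,\ |x-n|>N}|\mathrm{sinc}(x-n)|^p\le 2\Big(\frac2\pi\Big)^p\lambda(p;N),\] and equality holds at $x=1/2$.
   Context: $\mathrm{sinc}(x)=\frac{\sin(\pi x)}{\pi x}$ for $x\neq0$ and $\mathrm{sinc}(0)=1$. The incomplete Lambda function is $\lambda(s;a)=\sum_{n=1}^\infty \frac{1}{(2(n+a)-1)^s}$ for $s>1$, $a\ge0$. *)

theory Defs
  imports "HOL-Analysis.Analysis"
begin

definition sinc :: "real \<Rightarrow> real" where
  "sinc x = (if x = 0 then 1 else sin (pi * x) / (pi * x))"

definition incomplete_lambda :: "real \<Rightarrow> real \<Rightarrow> real" where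
  "incomplete_lambda s a = (\<Sum>n. 1 / (2 * (real (Suc n) + a) - 1) powr s)"

end

theory Submission
  imports Defs
begin



lemma prod_split_aux:
  fixes s :: real
  shows "(\<Prod>k=1..2*n. 1 - (2 * s)^2 / (real k)^2) =
         (\<Prod>k=1..n. 1 - s^2 / (real k)^2) * (\<Prod>j<n. 1 - 4 * s^2/(2*real j+1)^2)"
proof (induction n)
  case 0 thus ?case by simp
next
  case (Suc n)
  have e: "2 * Suc n = Suc (Suc (2*n))" by simp
  have A: "(\<Prod>k=1..2*Suc n. 1 - (2 * s)^2 / (real k)^2) =
        (\<Prod>k=1..2*n. 1 - (2 * s)^2 / (real k)^2) * (1 - (2 * s)^2/(real (2*n+1))^2) * (1 - (2 * s)^2/(real (2*n+2))^2)"
    unfolding e by (simp add: prod.nat_ivl_Suc' mult_ac)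
  have b: "(1 - (2 * s)^2/(real (2*n+2))^2) = 1 - s^2/(real (Suc n))^2"
  proof -
    have "real (2*n+2) = 2 * real (Suc n)" by simp
    thus ?thesis by (simp only: power_mult_distrib) simp
  qed
  have a: "(1 - (2 * s)^2/(real (2*n+1))^2) = 1 - 4 * s^2/(2*real n+1)^2"
    by (simp add: power2_eq_square add.commute)
  have P1: "(\<Prod>k=1..Suc n. 1 - s^2 / (real k)^2) = (\<Prod>k=1..n. 1 - s^2 / (real k)^2) * (1 - s^2/(real (Suc n))^2)"
    by (simp add: prod.nat_ivl_Suc' mult_ac)
  have C1: "(\<Prod>j<Suc n. 1 - 4 * s^2/(2*real j+1)^2) = (\<Prod>j<n. 1 - 4 * s^2/(2*real j+1)^2) * (1 - 4 * s^2/(2*real n+1)^2)"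
    by simp
  show ?case unfolding A a b P1 C1 Suc.IH by (simp add: mult_ac)
qed

lemma cos_product:
  fixes s :: real
  assumes s: "\<bar>s\<bar> < 1"
  shows "(\<lambda>n. \<Prod>j<n. 1 - 4 * s^2/(2*real j+1)^2) \<longlonglongrightarrow> cos (pi* s)"
proof (cases "s = 0")
  case True thus ?thesis by simp
next
  case False
  define P where "P n x = (\<Prod>k=1..n. 1 - x^2 / (real k)^2)" for n x
  have Pnz: "P n s \<noteq> 0" for n
  proof -
    have "1 - s^2/(real k)^2 \<noteq> 0" if "k \<in> {1..n}" for k
    proof
      assume "1 - s^2/(real k)^2 = 0"
      hence "s^2 = (real k)^2" using that by (simp add: field_simps)
      hence "\<bar>s\<bar> = real k" using abs_of_nonneg power2_eq_iff by fastforce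
      thus False using that s by auto
    qed
    thus ?thesis unfolding P_def by (simp add: prod_zero_iff)
  qed
  have sinz: "sin (pi* s) \<noteq> 0"
  proof
    assume "sin (pi* s) = 0"
    then obtain m :: int where "pi* s = m*pi" using sin_zero_iff_int2 by blast
    hence "s = m" by simp
    thus False using s False by (cases m rule: int_cases3) auto
  qed
  have L1: "(\<lambda>n. P n s) \<longlonglongrightarrow> sin (pi* s)/(pi* s)"
    unfolding P_def using sin_product_formula_real'[OF False] by simp
  have "(\<lambda>n. P n (2 * s)) \<longlonglongrightarrow> sin (pi*(2 * s))/(pi*(2 * s))"
    unfolding P_def using sin_product_formula_real'[of "2 * s"] False by simp
  hence L2: "(\<lambda>n. P (2*n) (2 * s)) \<longlonglongrightarrow> sin (pi*(2 * s))/(pi*(2 * s))"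
    using LIMSEQ_subseq_LIMSEQ[of "\<lambda>n. P n (2 * s)" _ "\<lambda>n. 2*n"] by (simp add: strict_mono_def o_def)
  have "(\<lambda>n. P (2*n) (2 * s) / P n s) \<longlonglongrightarrow> (sin (pi*(2 * s))/(pi*(2 * s))) / (sin (pi* s)/(pi* s))"
    using sinz False by (intro tendsto_divide L1 L2) auto
  also have "(sin (pi*(2 * s))/(pi*(2 * s))) / (sin (pi* s)/(pi* s)) = cos (pi* s)"
  proof -
    have "sin (pi*(2 * s)) = 2 * sin (pi* s) * cos (pi* s)"
      using sin_double[of "pi* s"] by (simp add: mult_ac)
    thus ?thesis using sinz False by (simp add: field_simps)
  qed
  also have "(\<lambda>n. P (2*n) (2 * s) / P n s) = (\<lambda>n. \<Prod>j<n. 1 - 4 * s^2/(2*real j+1)^2)"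
  proof (rule ext)
    fix n
    have "P (2*n) (2 * s) = P n s * (\<Prod>j<n. 1 - 4 * s^2/(2*real j+1)^2)"
      unfolding P_def by (rule prod_split_aux)
    thus "P (2*n) (2 * s) / P n s = (\<Prod>j<n. 1 - 4 * s^2/(2*real j+1)^2)"
      using Pnz[of n] by simp
  qed
  finally show ?thesis .
qed

lemma odd_sq_sum: "(\<lambda>n. \<Sum>j<n. 1/(2*real j+1)^2) \<longlonglongrightarrow> pi^2/8"
proof -
  define H where "H m = (\<Sum>i<m. 1/(real i+1)^2)" for m
  have HL: "H \<longlonglongrightarrow> pi^2/6"
    using inverse_squares_sums unfolding sums_def H_def by (simp add: add.commute)
  have H2: "H (2*n) = (\<Sum>j<n. 1/(2*real j+1)^2) + H n / 4" for n
  proof (induction n)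
    case 0 thus ?case by (simp add: H_def)
  next
    case (Suc n)
    have e: "2 * Suc n = Suc (Suc (2*n))" by simp
    have "H (2 * Suc n) = H (2*n) + 1/(2*real n+1)^2 + 1/(2*real n+2)^2"
      unfolding e by (simp add: H_def add.commute)
    also have "1/(2*real n+2)^2 = (1/(real n+1)^2)/4"
    proof -
      have "2*real n+2 = 2*(real n+1)" by simp
      thus ?thesis by (simp only: power_mult_distrib) simp
    qed
    finally have X: "H (2 * Suc n) = H (2*n) + 1/(2*real n+1)^2 + (1/(real n+1)^2)/4" .
    have Y: "H (Suc n) = H n + 1/(real n+1)^2" by (simp add: H_def)
    have Z: "(\<Sum>j<Suc n. 1/(2*real j+1)^2) = (\<Sum>j<n. 1/(2*real j+1)^2) + 1/(2*real n+1)^2" by simp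
    show ?case unfolding X Y Z Suc.IH by (simp add: add_divide_distrib)
  qed
  have HL2: "(\<lambda>n. H (2*n)) \<longlonglongrightarrow> pi^2/6"
    using LIMSEQ_subseq_LIMSEQ[OF HL, of "\<lambda>n. 2*n"] by (simp add: strict_mono_def o_def)
  have "(\<lambda>n. H (2*n) - H n / 4) \<longlonglongrightarrow> pi^2/6 - (pi^2/6)/4"
    by (intro tendsto_diff tendsto_divide HL HL2 tendsto_const) simp
  also have "(\<lambda>n. H (2*n) - H n / 4) = (\<lambda>n. \<Sum>j<n. 1/(2*real j+1)^2)"
  proof
    fix n show "H (2*n) - H n / 4 = (\<Sum>j<n. 1/(2*real j+1)^2)" using H2[of n] by linarith
  qed
  also have "pi^2/6 - (pi^2/6)/4 = pi^2/8" by simp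
  finally show ?thesis .
qed

lemma cos_bound:
  fixes s :: real
  assumes s: "\<bar>s\<bar> \<le> 1/2"
  shows "cos (pi * s) \<le> (1 - 4 * s^2) * exp (- (pi^2/2 - 4) * s^2)"
proof -
  define f where "f j = 1 - 4 * s^2/(2*real j+1)^2" for j
  define T where "T n = (\<Sum>j<n. 1/(2*real j+1)^2)" for n
  have s2: "4 * s^2 \<le> 1"
  proof -
    have "\<bar>s\<bar>^2 \<le> (1/2)^2" using s by (intro power_mono) auto
    thus ?thesis by (simp add: power2_eq_square)
  qed
  have fnn: "f j \<ge> 0" for j
  proof -
    have d: "(2*real j+1)^2 \<ge> 1" by simp
    have "4 * s^2/(2*real j+1)^2 \<le> 4 * s^2/1"
      using d by (intro divide_left_mono) auto
    hence "4 * s^2/(2*real j+1)^2 \<le> 1" using s2 by linarith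
    thus ?thesis by (simp add: f_def)
  qed
  have fexp: "f j \<le> exp (- (4 * s^2/(2*real j+1)^2))" for j
    unfolding f_def using exp_ge_add_one_self[of "- (4 * s^2/(2*real j+1)^2)"] by simp
  have ind: "(\<Prod>j<Suc n. f j) \<le> (1 - 4 * s^2) * exp (- (4 * s^2) * (T (Suc n) - 1))" for n
  proof (induction n)
    case 0 thus ?case by (simp add: f_def T_def)
  next
    case (Suc n)
    have Cnn: "0 \<le> (\<Prod>j<Suc n. f j)" by (intro prod_nonneg) (simp add: fnn)
    have Xnn: "0 \<le> (1 - 4 * s^2) * exp (- (4 * s^2) * (T (Suc n) - 1))" using s2 by simp
    have "(\<Prod>j<Suc (Suc n). f j) = (\<Prod>j<Suc n. f j) * f (Suc n)" by simp
    also have "\<dots> \<le> ((1 - 4 * s^2) * exp (- (4 * s^2) * (T (Suc n) - 1))) * exp (- (4 * s^2/(2*real (Suc n)+1)^2))"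
      by (rule mult_mono[OF Suc.IH fexp Xnn fnn])
    also have "\<dots> = (1 - 4 * s^2) * exp (- (4 * s^2) * (T (Suc n) - 1) + - (4 * s^2/(2*real (Suc n)+1)^2))"
      by (simp only: exp_add mult.assoc)
    also have "- (4 * s^2) * (T (Suc n) - 1) + - (4 * s^2/(2*real (Suc n)+1)^2) = - (4 * s^2) * (T (Suc (Suc n)) - 1)"
      unfolding T_def by (simp add: algebra_simps)
    finally show ?case .
  qed
  have L1: "(\<lambda>n. \<Prod>j<Suc n. f j) \<longlonglongrightarrow> cos (pi * s)"
  proof -
    have "\<bar>s\<bar> < 1" using s by simp
    from LIMSEQ_Suc[OF cos_product[OF this]] show ?thesis by (simp add: f_def)
  qed
  have L2: "(\<lambda>n. (1 - 4 * s^2) * exp (- (4 * s^2) * (T (Suc n) - 1))) \<longlonglongrightarrow>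
            (1 - 4 * s^2) * exp (- (4 * s^2) * (pi^2/8 - 1))"
    unfolding T_def by (intro tendsto_mult tendsto_const tendsto_exp tendsto_diff LIMSEQ_Suc[OF odd_sq_sum])
  have "cos (pi * s) \<le> (1 - 4 * s^2) * exp (- (4 * s^2) * (pi^2/8 - 1))"
    by (rule LIMSEQ_le[OF L1 L2]) (use ind in auto)
  also have "- (4 * s^2) * (pi^2/8 - 1) = - (pi^2/2 - 4) * s^2" by (simp add: algebra_simps)
  finally show ?thesis .
qed




definition ee :: "real \<Rightarrow> real \<Rightarrow> real" where
  "ee q w = ln (1+q*w-q*w^2) - ln (1-q*w-q*w^2) - q*(ln (1+w) - ln (1-w))"

definition dd :: "real \<Rightarrow> real \<Rightarrow> real" where
  "dd q w = 2*q*w^2*((q^2+3*q-1) - (q^2+q)*w^2) / ((1+q*w-q*w^2)*(1-q*w-q*w^2)*((1+w)*(1-w)))"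

lemma ee_deriv:
  fixes q w :: real
  assumes q: "q > 0" and w: "0 \<le> w" "w < 1" and B: "1 - q*w - q*w^2 > 0"
  shows "(ee q has_real_derivative dd q w) (at w)"
proof -
  define A where "A = 1+q*w-q*w^2"
  define B where "B = 1-q*w-q*w^2"
  have A: "A > 0"
  proof -
    have "q*w*(1-w) \<ge> 0" using w q by auto
    thus ?thesis by (simp add: A_def algebra_simps power2_eq_square)
  qed
  have Bp: "B > 0" using B by (simp add: B_def)
  have w1: "1 - w > 0" "1 + w > 0" using w by auto
  have nz: "A \<noteq> 0" "B \<noteq> 0" "1 + w \<noteq> 0" "1 - w \<noteq> 0" using A Bp w1 by auto
  have nz2: "(1+w)*(1-w) \<noteq> 0" "1 - w*w \<noteq> 0" "1 - w^2 \<noteq> 0"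
  proof -
    have "(1+w)*(1-w) > 0" using w1 by simp
    thus "(1+w)*(1-w) \<noteq> 0" "1 - w*w \<noteq> 0" "1 - w^2 \<noteq> 0" by (auto simp: power2_eq_square algebra_simps)
  qed
  have der: "(ee q has_real_derivative
      ((q - 2*q*w)/(1+q*w-q*w^2) - (-q-2*q*w)/(1-q*w-q*w^2) - q*(1/(1+w) - (-1)/(1-w)))) (at w)"
    unfolding ee_def using A Bp w
    by (auto intro!: derivative_eq_intros simp: power2_eq_square mult_ac A_def B_def)
  have "(q - 2*q*w)/(1+q*w-q*w^2) - (-q-2*q*w)/(1-q*w-q*w^2) - q*(1/(1+w) - (-1)/(1-w))
        = (q - 2*q*w)/A + (q+2*q*w)/B - q*(1/(1+w) + 1/(1-w))"
    unfolding A_def B_def by (simp add: diff_divide_distrib add_divide_distrib)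
  also have "\<dots> = ((q - 2*q*w)*B*((1+w)*(1-w)) + (q+2*q*w)*A*((1+w)*(1-w)) - q*((1-w)+(1+w))*(A*B)) / (A*B*((1+w)*(1-w)))"
    using nz nz2 by (simp add: field_simps)
  also have "(q - 2*q*w)*B*((1+w)*(1-w)) + (q+2*q*w)*A*((1+w)*(1-w)) - q*((1-w)+(1+w))*(A*B)
       = 2*q*w^2*((q^2+3*q-1) - (q^2+q)*w^2)"
    unfolding A_def B_def by (simp add: algebra_simps power2_eq_square)
  finally show ?thesis using der unfolding A_def B_def dd_def by simp
qed

lemma ee_E:
  fixes q y :: real
  assumes q: "q > 0" and y: "0 \<le> y" "y < 1" and B: "1 - q*y - q*y^2 > 0" and e: "ee q y \<ge> 0"
  shows "((1+y)/(1-y)) powr q \<le> (1+q*y-q*y^2)/(1-q*y-q*y^2)"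
proof -
  have A: "1+q*y-q*y^2 > 0"
  proof -
    have "q*y*(1-y) \<ge> 0" using y q by auto
    thus ?thesis by (simp add: algebra_simps power2_eq_square)
  qed
  have "q * ln ((1+y)/(1-y)) \<le> ln ((1+q*y-q*y^2)/(1-q*y-q*y^2))"
    using y B A e by (simp add: ee_def ln_div)
  hence "exp (q * ln ((1+y)/(1-y))) \<le> (1+q*y-q*y^2)/(1-q*y-q*y^2)"
    using B A by (metis divide_pos_pos exp_le_cancel_iff exp_ln)
  thus ?thesis using y by (simp add: powr_def)
qed

lemma ee_E_rev:
  fixes q y :: real
  assumes q: "q > 0" and y: "0 \<le> y" "y < 1" and B: "1 - q*y - q*y^2 > 0"
    and E: "((1+y)/(1-y)) powr q \<le> (1+q*y-q*y^2)/(1-q*y-q*y^2)"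
  shows "ee q y \<ge> 0"
proof -
  have A: "1+q*y-q*y^2 > 0"
  proof -
    have "q*y*(1-y) \<ge> 0" using y q by auto
    thus ?thesis by (simp add: algebra_simps power2_eq_square)
  qed
  have "exp (q * ln ((1+y)/(1-y))) \<le> (1+q*y-q*y^2)/(1-q*y-q*y^2)"
    using E y by (simp add: powr_def)
  hence "q * ln ((1+y)/(1-y)) \<le> ln ((1+q*y-q*y^2)/(1-q*y-q*y^2))"
    using A B by (metis divide_pos_pos ln_exp ln_le_cancel_iff exp_gt_zero)
  thus ?thesis using y B A by (simp add: ee_def ln_div)
qed

lemma ee_mono_up:
  fixes q y :: real
  assumes q: "q > 0" and y: "0 \<le> y" "y < 1" and B: "1 - q*y - q*y^2 > 0"
    and pos: "\<And>w. 0 \<le> w \<Longrightarrow> w \<le> y \<Longrightarrow> (q^2+3*q-1) - (q^2+q)*w^2 \<ge> 0"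
  shows "ee q y \<ge> 0"
proof -
  have Bw: "1 - q*w - q*w^2 > 0" if "0 \<le> w" "w \<le> y" for w
  proof -
    have "q*w \<le> q*y" using that q by (intro mult_left_mono) auto
    moreover have "q*w^2 \<le> q*y^2" using that q by (intro mult_left_mono power_mono) auto
    ultimately show ?thesis using B by linarith
  qed
  have Aw: "1+q*w-q*w^2 > 0" if "0 \<le> w" "w \<le> y" for w
  proof -
    have "q*w*(1-w) \<ge> 0" using that q y by auto
    thus ?thesis by (simp add: algebra_simps power2_eq_square)
  qed
  have "ee q 0 \<le> ee q y"
  proof (rule deriv_nonneg_imp_mono[of 0 y "ee q" "dd q"])
    fix w assume w: "w \<in> {0..y}"
    show "(ee q has_real_derivative dd q w) (at w)"
      using w y by (intro ee_deriv q Bw) auto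
    show "dd q w \<ge> 0" unfolding dd_def
      using w y q pos[of w] Aw[of w] Bw[of w] by (intro divide_nonneg_pos mult_nonneg_nonneg mult_pos_pos) auto
  qed (use y in auto)
  thus ?thesis by (simp add: ee_def)
qed

lemma ee_mono_down:
  fixes q y z :: real
  assumes q: "q > 0" and y: "0 \<le> y" "y \<le> z" "z < 1" and B: "1 - q*z - q*z^2 > 0"
    and neg: "\<And>w. y \<le> w \<Longrightarrow> w \<le> z \<Longrightarrow> (q^2+3*q-1) - (q^2+q)*w^2 \<le> 0"
  shows "ee q z \<le> ee q y"
proof -
  have Bw: "1 - q*w - q*w^2 > 0" if "0 \<le> w" "w \<le> z" for w
  proof -
    have "q*w \<le> q*z" using that q by (intro mult_left_mono) auto
    moreover have "q*w^2 \<le> q*z^2" using that q by (intro mult_left_mono power_mono) auto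
    ultimately show ?thesis using B by linarith
  qed
  have Aw: "1+q*w-q*w^2 > 0" if "0 \<le> w" "w \<le> z" for w
  proof -
    have "q*w*(1-w) \<ge> 0" using that q y by auto
    thus ?thesis by (simp add: algebra_simps power2_eq_square)
  qed
  show ?thesis
  proof (rule deriv_nonpos_imp_antimono[of y z "ee q" "dd q"])
    fix w assume w: "w \<in> {y..z}"
    show "(ee q has_real_derivative dd q w) (at w)"
      using w y by (intro ee_deriv q Bw) auto
    have "2*q*w^2*((q^2+3*q-1) - (q^2+q)*w^2) \<le> 0"
      using q neg[of w] w by (intro mult_nonneg_nonpos) auto
    moreover have "(1+q*w-q*w^2)*(1-q*w-q*w^2)*((1+w)*(1-w)) > 0"
      using w y Aw[of w] Bw[of w] by (intro mult_pos_pos) auto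
    ultimately show "dd q w \<le> 0" unfolding dd_def
      by (simp add: divide_nonpos_pos)
  qed (use y in auto)
qed


lemma Dc:
  fixes q q' y :: real
  assumes q: "0 \<le> q" "q \<le> q'" and y: "0 \<le> y" "y < 1"
    and E: "1 - q'*y - q'*y^2 > 0 \<Longrightarrow> ((1+y)/(1-y)) powr q' \<le> (1+q'*y-q'*y^2)/(1-q'*y-q'*y^2)"
  shows "(1+y) powr q - (1-y) powr q \<le> q' * y * ((1+y) powr (q+1) + (1-y) powr (q+1))"
proof -
  define a where "a = (1-y) powr q"
  define r where "r = (1+y)/(1-y)"
  have a: "a > 0" using y by (simp add: a_def)
  have r1: "r \<ge> 1" using y by (simp add: r_def field_simps)
  have ry: "1+y = r*(1-y)" using y by (simp add: r_def)
  have p1: "(1+y) powr q = r powr q * a" unfolding a_def ry using y r1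
    by (simp add: powr_mult)
  have p2: "(1+y) powr (q+1) = (1+y) * (r powr q * a)"
    using y by (simp add: powr_add p1)
  have p3: "(1-y) powr (q+1) = (1-y) * a"
    using y by (simp add: powr_add a_def)
  have q'0: "q' \<ge> 0" using q by linarith
  have key: "r powr q * (1 - q'*y*(1+y)) \<le> 1 + q'*y*(1-y)"
  proof (cases "1 - q'*y - q'*y^2 > 0")
    case True
    have "r powr q \<le> r powr q'" using r1 q by (intro powr_mono) auto
    also have "\<dots> \<le> (1+q'*y-q'*y^2)/(1-q'*y-q'*y^2)" using E[OF True] by (simp add: r_def)
    finally have "r powr q * (1-q'*y-q'*y^2) \<le> 1+q'*y-q'*y^2"
      using True by (simp add: pos_le_divide_eq)
    thus ?thesis by (simp add: algebra_simps power2_eq_square)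
  next
    case False
    hence "1 - q'*y*(1+y) \<le> 0" by (simp add: algebra_simps power2_eq_square)
    hence "r powr q * (1 - q'*y*(1+y)) \<le> 0" by (simp add: mult_nonneg_nonpos)
    moreover have "1 + q'*y*(1-y) \<ge> 0" using y q'0 by simp
    ultimately show ?thesis by linarith
  qed
  have "(1+y) powr q - (1-y) powr q = a * (r powr q - 1)" by (simp add: p1 a_def[symmetric] algebra_simps)
  also have "\<dots> \<le> a * (q' * y * ((1+y) * r powr q + (1-y)))"
    using key a by (intro mult_left_mono) (auto simp: algebra_simps)
  also have "\<dots> = q' * y * ((1+y) powr (q+1) + (1-y) powr (q+1))"
    unfolding p2 p3 by (simp add: algebra_simps)
  finally show ?thesis .
qed

lemma M_bound_gen:
  fixes q q' u :: real
  assumes q: "0 \<le> q" "q \<le> q'" and u: "0 \<le> u" "u < 1"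
    and E: "\<And>y. 0 \<le> y \<Longrightarrow> y \<le> u \<Longrightarrow> 1 - q'*y - q'*y^2 > 0 \<Longrightarrow>
              ((1+y)/(1-y)) powr q' \<le> (1+q'*y-q'*y^2)/(1-q'*y-q'*y^2)"
  shows "((1+u) powr (q+1) + (1-u) powr (q+1)) / 2 \<le> exp ((q+1)*(q'/2)*u^2)"
proof -
  define S where "S y = (1+y) powr (q+1) + (1-y) powr (q+1)" for y
  define F where "F y = (q+1)*(q'/2)*y^2 - ln (S y / 2)" for y
  define F' where "F' y = (q+1)*(q'/2)*(2*y) - ((q+1)*(1+y) powr q - (q+1)*(1-y) powr q) / S y" for y
  have Spos: "S y > 0" if "0 \<le> y" "y < 1" for y using that by (simp add: S_def add_pos_pos)
  have der: "(F has_real_derivative F' y) (at y)" if "y \<in> {0..u}" for y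
  proof -
    have y: "0 \<le> y" "y < 1" using that u by auto
    have dS: "(S has_real_derivative ((q+1)*(1+y) powr q - (q+1)*(1-y) powr q)) (at y)"
      unfolding S_def using y
      by (auto intro!: derivative_eq_intros)
    show ?thesis unfolding F_def F'_def
      using y Spos[OF y]
      by (auto intro!: derivative_eq_intros dS simp: field_simps)
  qed
  have nn: "F' y \<ge> 0" if "y \<in> {0..u}" for y
  proof -
    have y: "0 \<le> y" "y < 1" "y \<le> u" using that u by auto
    have "(1+y) powr q - (1-y) powr q \<le> q' * y * S y"
      unfolding S_def by (rule Dc[OF q y(1,2) E[OF y(1,3)]])
    hence "(q+1)*((1+y) powr q - (1-y) powr q) \<le> (q+1)*(q' * y * S y)"
      using q by (intro mult_left_mono) auto
    hence "((q+1)*(1+y) powr q - (q+1)*(1-y) powr q) / S y \<le> (q+1)*(q'/2)*(2*y)"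
      using Spos[OF y(1,2)] by (simp add: pos_divide_le_eq algebra_simps)
    thus ?thesis by (simp add: F'_def)
  qed
  have "F 0 \<le> F u" by (rule deriv_nonneg_imp_mono[OF der nn]) (use u in auto)
  hence "ln (S u / 2) \<le> (q+1)*(q'/2)*u^2" by (simp add: F_def S_def)
  hence "S u / 2 \<le> exp ((q+1)*(q'/2)*u^2)"
    using Spos[OF u] by (metis exp_le_cancel_iff exp_ln half_gt_zero)
  thus ?thesis by (simp add: S_def)
qed




lemma q0_bounds: "467/1000 < pi^2/4 - 2" "pi^2/4 - 2 < 47/100"
proof -
  have p1: "3.14159 \<le> pi" using pi_approx(1) by simp
  have p2: "pi \<le> 3.1416" using pi_approx(2) by simp
  have "3.14159 * 3.14159 \<le> pi * pi" using p1 by (intro mult_mono) auto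
  thus "467/1000 < pi^2/4 - 2" by (simp add: power2_eq_square)
  have "pi * pi \<le> 3.1416 * 3.1416" using p2 by (intro mult_mono) auto
  thus "pi^2/4 - 2 < 47/100" by (simp add: power2_eq_square)
qed

lemma pow99: "(99::real) powr (47/100) \<le> 10"
proof (rule power_le_imp_le_base[of _ 99])
  have "((99::real) powr (47/100)) ^ Suc 99 = 99 powr (47/100 * real (Suc 99))"
    by (subst powr_realpow[symmetric]) (auto simp: powr_powr)
  also have "\<dots> = 99 powr (real (47::nat))" by simp
  also have "\<dots> = 99 ^ 47" by (subst powr_realpow) auto
  also have "\<dots> \<le> (10::real) ^ Suc 99" by simp
  finally show "((99::real) powr (47/100)) ^ Suc 99 \<le> 10 ^ Suc 99" .
qed simp

lemma superadd_powr:
  fixes x y p :: real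
  assumes "0 \<le> x" "0 \<le> y" "1 \<le> p"
  shows "x powr p + y powr p \<le> (x+y) powr p"
proof (cases "x + y = 0")
  case True
  hence "x = 0" "y = 0" using assms by linarith+
  thus ?thesis by simp
next
  case False
  hence xy: "x + y > 0" using assms by linarith
  have "x powr p = x * x powr (p-1)"
    using assms by (cases "x = 0") (auto simp: powr_diff)
  also have "\<dots> \<le> x * (x+y) powr (p-1)"
    using assms by (intro mult_left_mono powr_mono2) auto
  finally have 1: "x powr p \<le> x * (x+y) powr (p-1)" .
  have "y powr p = y * y powr (p-1)"
    using assms by (cases "y = 0") (auto simp: powr_diff)
  also have "\<dots> \<le> y * (x+y) powr (p-1)"
    using assms by (intro mult_left_mono powr_mono2) auto
  finally have 2: "y powr p \<le> y * (x+y) powr (p-1)" .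
  have e1: "(x+y) powr (p-1) = (x+y) powr p / (x+y)" using xy by (simp add: powr_diff)
  have "x * (x+y) powr (p-1) + y * (x+y) powr (p-1) = (x+y) * ((x+y) powr p / (x+y))"
    unfolding e1 by (rule distrib_right[symmetric])
  also have "\<dots> = (x+y) powr p" using xy by simp
  finally have "x * (x+y) powr (p-1) + y * (x+y) powr (p-1) = (x+y) powr p" .
  thus ?thesis using 1 2 by linarith
qed



lemma ln2_le: "ln (2::real) \<le> 7/10"
proof -
  have "(1 + 7/640::real) ^ 64 \<le> exp (7/640) ^ 64"
    using exp_ge_add_one_self[of "7/640::real"] by (intro power_mono) auto
  also have "exp (7/640::real) ^ 64 = exp (real 64 * (7/640))"
    by (rule exp_of_nat_mult[symmetric])
  also have "real 64 * (7/640::real) = 7/10" by simp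
  finally have a: "(1 + 7/640::real) ^ 64 \<le> exp (7/10)" .
  have b: "(2::real) \<le> (1 + 7/640) ^ 64" by (simp add: power_divide le_divide_eq)
  have "2 \<le> exp (7/10::real)" using a b by linarith
  thus ?thesis by (metis exp_le_cancel_iff exp_ln zero_less_numeral)
qed




lemma E_small:
  fixes y :: real
  defines "q \<equiv> pi^2/4 - 2"
  assumes y: "0 \<le> y" "y \<le> 49/50"
  shows "((1+y)/(1-y)) powr q \<le> (1+q*y-q*y^2)/(1-q*y-q*y^2)"
proof -
  have q1: "467/1000 < q" and q2: "q < 47/100" using q0_bounds by (auto simp: q_def)
  have Bw: "1 - q*w - q*w^2 > 0" if "0 \<le> w" "w \<le> 49/50" for w
  proof -
    have "q*w \<le> 47/100 * (49/50)" using that q1 q2 by (intro mult_mono) auto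
    moreover have "w^2 \<le> (49/50)^2" using that by (intro power_mono) auto
    hence "q*w^2 \<le> 47/100 * (49/50)^2" using q1 q2 by (intro mult_mono) auto
    ultimately show ?thesis by (simp add: power2_eq_square)
  qed
  have qpos: "q > 0" using q1 by simp
  define K where "K = q^2+3*q-1"
  define L where "L = q^2+q"
  have Lpos: "L > 0" using qpos by (auto simp: L_def intro!: add_pos_pos)
  have z0: "ee q (49/50) \<ge> 0"
  proof (rule ee_E_rev[OF qpos])
    show "0 \<le> (49/50::real)" "(49/50::real) < 1" by auto
    show B: "1 - q*(49/50) - q*(49/50)^2 > 0" using Bw[of "49/50"] by simp
    have "((1+49/50)/(1-49/50::real)) powr q = 99 powr q" by simp
    also have "\<dots> \<le> 99 powr (47/100)" using q2 by (intro powr_mono) auto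
    also have "\<dots> \<le> 10" by (rule pow99)
    also have "10 \<le> (1+q*(49/50)-q*(49/50)^2)/(1-q*(49/50)-q*(49/50)^2)"
    proof -
      have "10 * (1-q*(49/50)-q*(49/50)^2) \<le> 1+q*(49/50)-q*(49/50)^2"
        using q1 by (simp add: power2_eq_square algebra_simps)
      thus ?thesis using B by (simp add: le_divide_eq)
    qed
    finally show "((1+49/50)/(1-49/50::real)) powr q \<le> (1+q*(49/50)-q*(49/50)^2)/(1-q*(49/50)-q*(49/50)^2)" .
  qed
  have "ee q y \<ge> 0"
  proof (cases "L * y^2 \<le> K")
    case True
    show ?thesis
    proof (rule ee_mono_up[OF qpos y(1)])
      show "y < 1" using y by simp
      show "1 - q*y - q*y^2 > 0" using Bw y by simp
      fix w assume w: "0 \<le> w" "w \<le> y"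
      have "w^2 \<le> y^2" using w by (intro power_mono) auto
      hence "L * w^2 \<le> L * y^2" using Lpos by (intro mult_left_mono) auto
      thus "(q^2+3*q-1) - (q^2+q)*w^2 \<ge> 0" using True by (simp add: K_def L_def)
    qed
  next
    case False
    have "ee q (49/50) \<le> ee q y"
    proof (rule ee_mono_down[OF qpos y])
      show "(49/50::real) < 1" by simp
      show "1 - q*(49/50) - q*(49/50)^2 > 0" using Bw[of "49/50"] by simp
      fix w assume w: "y \<le> w" "w \<le> 49/50"
      have "y^2 \<le> w^2" using w y by (intro power_mono) auto
      hence "L * y^2 \<le> L * w^2" using Lpos by (intro mult_left_mono) auto
      thus "(q^2+3*q-1) - (q^2+q)*w^2 \<le> 0" using False by (simp add: K_def L_def)
    qed
    thus ?thesis using z0 by linarith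
  qed
  thus ?thesis using ee_E[OF qpos] y Bw[OF y] by simp
qed

lemma M_big:
  fixes q q' u :: real
  assumes q': "1/2 \<le> q'" and q: "0 \<le> q" "q \<le> q'" and u: "0 \<le> u" "u < 1"
  shows "((1+u) powr (q+1) + (1-u) powr (q+1)) / 2 \<le> exp ((q+1)*(q'/2)*u^2)"
proof (rule M_bound_gen[OF q u])
  fix y assume y: "0 \<le> y" "y \<le> u" and B: "1 - q'*y - q'*y^2 > 0"
  have qp: "q' > 0" using q' by simp
  have "ee q' y \<ge> 0"
  proof (rule ee_mono_up[OF qp y(1) _ B])
    show "y < 1" using y u by simp
    fix w assume w: "0 \<le> w" "w \<le> y"
    have "w^2 \<le> 1" using w y u by (simp add: power_le_one)
    hence "(q'^2+q')*w^2 \<le> (q'^2+q')" using qp by (simp add: mult_left_le)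
    thus "(q'^2+3*q'-1) - (q'^2+q')*w^2 \<ge> 0" using q' by simp
  qed
  thus "((1+y)/(1-y)) powr q' \<le> (1+q'*y-q'*y^2)/(1-q'*y-q'*y^2)"
    using ee_E[OF qp y(1) _ B] y u by simp
qed

lemma M_small:
  fixes q u :: real
  defines "q0 \<equiv> pi^2/4 - 2"
  assumes q: "0 \<le> q" "q \<le> q0" and u: "0 \<le> u" "u < 1"
  shows "((1+u) powr (q+1) + (1-u) powr (q+1)) / 2 \<le> exp ((q+1)*(q0/2)*u^2)"
proof (cases "u \<le> 49/50")
  case True
  show ?thesis
  proof (rule M_bound_gen[OF q u])
    fix y assume y: "0 \<le> y" "y \<le> u"
    show "((1+y)/(1-y)) powr q0 \<le> (1+q0*y-q0*y^2)/(1-q0*y-q0*y^2)"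
      unfolding q0_def using y True by (intro E_small) auto
  qed
next
  case False
  have q1: "467/1000 < q0" and q2: "q0 < 47/100" using q0_bounds by (auto simp: q0_def)
  have "(1+u) powr (q+1) + (1-u) powr (q+1) \<le> ((1+u)+(1-u)) powr (q+1)"
    using u q by (intro superadd_powr) auto
  hence "((1+u) powr (q+1) + (1-u) powr (q+1)) / 2 \<le> 2 powr (q+1) / 2" by simp
  also have "2 powr (q+1) / 2 = exp (q * ln 2)" by (simp add: powr_add) (simp add: powr_def)
  also have "exp (q * ln 2) \<le> exp ((q+1)*(q0/2)*u^2)"
  proof -
    have "q * ln 2 \<le> q * (7/10)" using q ln2_le by (intro mult_left_mono) auto
    also have "\<dots> \<le> q * ((1+q0)*u^2/2)"
    proof (rule mult_left_mono[OF _ q(1)])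
      have "(49/50::real)^2 \<le> u^2" using False by (intro power_mono) auto
      hence "(1467/1000)*(49/50::real)^2 \<le> (1+q0)*u^2" using q1 by (intro mult_mono) auto
      thus "7/10 \<le> (1+q0)*u^2/2" by (simp add: power2_eq_square)
    qed
    also have "\<dots> \<le> (q+1)*(q0/2)*u^2"
    proof -
      have "q*(1+q0) \<le> (q+1)*q0" using q by (simp add: algebra_simps)
      hence "q*(1+q0)*u^2 \<le> (q+1)*q0*u^2" by (intro mult_right_mono) auto
      thus ?thesis by (simp add: algebra_simps)
    qed
    finally show ?thesis by simp
  qed
  finally show ?thesis .
qed




lemma h_antimono:
  fixes y1 y2 :: real
  assumes "0 \<le> y1" "y1 \<le> y2"
  shows "(1 - y2) * exp y2 \<le> (1 - y1) * exp y1"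
proof (rule deriv_nonpos_imp_antimono[of y1 y2 "\<lambda>y. (1 - y) * exp y" "\<lambda>y. - y * exp y"])
  fix x assume "x \<in> {y1..y2}"
  show "((\<lambda>y. (1 - y) * exp y) has_real_derivative - x * exp x) (at x)"
    by (auto intro!: derivative_eq_intros simp: algebra_simps)
  show "- x * exp x \<le> 0" using \<open>x \<in> {y1..y2}\<close> assms by auto
qed (use assms in auto)

lemma cos_bound2:
  fixes s b :: real
  assumes b: "1/2 \<le> b" and s: "\<bar>s\<bar> \<le> 1/2"
  shows "cos (pi * s) \<le> (1 - (s/b)^2) * exp (- (pi^2*b^2/2 - 1) * (s/b)^2)"
proof -
  have bp: "b > 0" using b by simp
  have s2: "4 * s^2 \<le> 1"
  proof -
    have "\<bar>s\<bar>^2 \<le> (1/2)^2" using s by (intro power_mono) auto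
    thus ?thesis by (simp add: power2_eq_square)
  qed
  have u2: "(s/b)^2 \<le> 4 * s^2"
  proof -
    have "1/2 * (1/2) \<le> b * b" using b by (intro mult_mono) auto
    hence "1/4 \<le> b^2" by (simp add: power2_eq_square)
    hence "s^2 / b^2 \<le> s^2 / (1/4)" by (intro divide_left_mono) auto
    thus ?thesis by (simp add: power_divide)
  qed
  have "cos (pi * s) \<le> (1 - 4 * s^2) * exp (- (pi^2/2 - 4) * s^2)" using cos_bound s by simp
  also have "\<dots> = ((1 - 4 * s^2) * exp (4 * s^2)) * exp (- (pi^2/2) * s^2)"
    by (simp add: mult.assoc flip: exp_add) (simp add: algebra_simps)
  also have "\<dots> \<le> ((1 - (s/b)^2) * exp ((s/b)^2)) * exp (- (pi^2/2) * s^2)"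
    using h_antimono[OF _ u2] by (intro mult_right_mono) auto
  also have "\<dots> = (1 - (s/b)^2) * exp (- (pi^2*b^2/2 - 1) * (s/b)^2)"
  proof -
    have "s^2 = b^2 * (s/b)^2" using bp by (simp add: power_divide)
    hence "(s/b)^2 + - (pi^2/2) * s^2 = - (pi^2*b^2/2 - 1) * (s/b)^2"
      by (simp add: algebra_simps)
    thus ?thesis by (simp add: mult.assoc flip: exp_add)
  qed
  finally show ?thesis .
qed

lemma M_both:
  fixes n :: nat and p u :: real
  assumes p: "1 < p" "p \<le> pi^2*(real n+1/2)^2 - 1" and u: "0 \<le> u" "u < 1"
  shows "((1+u) powr p + (1-u) powr p) / 2 \<le> exp (p * (pi^2*(real n+1/2)^2/2 - 1) * u^2)"
proof (cases "n = 0")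
  case True
  have X: "((1+u) powr ((p-1)+1) + (1-u) powr ((p-1)+1)) / 2 \<le> exp (((p-1)+1)*((pi^2/4-2)/2)*u^2)"
    using p u True by (intro M_small) (auto simp: power2_eq_square)
  have E: "((p-1)+1)*((pi^2/4-2)/2)*u^2 = p * (pi^2*(real n+1/2)^2/2 - 1) * u^2"
    using True by (simp add: power2_eq_square field_simps)
  show ?thesis using X unfolding E by simp
next
  case False
  hence n1: "real n \<ge> 1" by simp
  have pi3: "pi \<ge> 3" using pi_gt3 by simp
  have "3*3 * (3/2 * (3/2)) \<le> pi*pi * ((real n + 1/2)*(real n+1/2))"
    using n1 pi3 by (intro mult_mono) auto
  hence big: "1/2 \<le> pi^2*(real n+1/2)^2 - 2" by (simp add: power2_eq_square)
  have "((1+u) powr ((p-1)+1) + (1-u) powr ((p-1)+1)) / 2 \<le> exp (((p-1)+1)*((pi^2*(real n+1/2)^2 - 2)/2)*u^2)"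
    using p u big by (intro M_big) auto
  moreover have E: "((p-1)+1)*((pi^2*(real n+1/2)^2 - 2)/2)*u^2 = p * (pi^2*(real n+1/2)^2/2 - 1) * u^2"
    by (simp add: field_simps)
  ultimately show ?thesis unfolding E by simp
qed

lemma termwise0:
  fixes n :: nat and p s :: real
  assumes p: "1 < p" "p \<le> pi^2*(real n+1/2)^2 - 1" and s: "0 \<le> s" "s < 1/2"
  shows "(cos (pi * s)/(pi*(real n+1/2+s))) powr p + (cos (pi * s)/(pi*(real n+1/2-s))) powr p
           \<le> 2 * (1/(pi*(real n+1/2))) powr p"
proof -
  define b where "b = real n + 1/2"
  define u where "u = s/b"
  define c where "c = pi^2*b^2/2 - 1"
  define e where "e = exp (- c * u^2)"
  define C where "C = cos (pi * s)"
  have b: "b \<ge> 1/2" by (simp add: b_def)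
  have bp: "b > 0" using b by simp
  have u: "0 \<le> u" "u < 1" using s b by (auto simp: u_def field_simps)
  have ep: "e > 0" by (simp add: e_def)
  have C0: "C \<ge> 0"
  proof -
    have "0 \<le> pi * s" using s by simp
    moreover have "pi * s \<le> pi * (1/2)" using s by (intro mult_left_mono) auto
    ultimately have 1: "- (pi/2) \<le> pi * s" and 2: "pi * s \<le> pi/2" using pi_gt_zero by linarith+
    show ?thesis unfolding C_def by (rule cos_ge_zero[OF 1 2])
  qed
  have Cb: "C \<le> (1-u^2)*e"
    using cos_bound2[OF b, of s] s by (simp add: C_def u_def c_def e_def)
  have u1: "1 + u > 0" "1 - u > 0" using u by auto
  have bs1: "b+s = b*(1+u)" and bs2: "b-s = b*(1-u)" using bp by (simp_all add: u_def field_simps)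
  have A1: "C/(pi*(b+s)) \<le> (1-u)*e/(pi*b)"
  proof -
    have "C/(pi*(b+s)) \<le> (1-u^2)*e/(pi*(b+s))"
      using Cb bp s by (intro divide_right_mono) auto
    also have "\<dots> = ((1-u)*e*(1+u))/((pi*b)*(1+u))" unfolding bs1
      by (simp add: power2_eq_square algebra_simps)
    also have "\<dots> = (1-u)*e/(pi*b)" using u1 by (intro nonzero_mult_divide_mult_cancel_right) auto
    finally show ?thesis .
  qed
  have A2: "C/(pi*(b-s)) \<le> (1+u)*e/(pi*b)"
  proof -
    have "b - s > 0" using b s by simp
    hence "C/(pi*(b-s)) \<le> (1-u^2)*e/(pi*(b-s))"
      using Cb by (intro divide_right_mono) auto
    also have "\<dots> = (1+u)*e/(pi*b)" unfolding bs2 using u bp u1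
      by (simp add: power2_eq_square field_simps)
    finally show ?thesis .
  qed
  have bsp: "b - s > 0" using b s by simp
  have "(C/(pi*(b+s))) powr p + (C/(pi*(b-s))) powr p \<le> ((1-u)*e/(pi*b)) powr p + ((1+u)*e/(pi*b)) powr p"
    using A1 A2 C0 bp s bsp p by (intro add_mono powr_mono2) auto
  also have "\<dots> = (e/(pi*b)) powr p * ((1+u) powr p + (1-u) powr p)"
  proof -
    have "((1-u)*e/(pi*b)) powr p = (1-u) powr p * (e/(pi*b)) powr p"
      using u ep bp by (subst powr_mult[symmetric]) (auto simp: mult.assoc)
    moreover have "((1+u)*e/(pi*b)) powr p = (1+u) powr p * (e/(pi*b)) powr p"
      using u ep bp by (subst powr_mult[symmetric]) (auto simp: mult.assoc)
    ultimately show ?thesis by (simp add: algebra_simps)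
  qed
  also have "\<dots> \<le> (e/(pi*b)) powr p * (2 * exp (p * c * u^2))"
  proof (rule mult_left_mono)
    show "(1+u) powr p + (1-u) powr p \<le> 2 * exp (p * c * u^2)"
      using M_both[OF p u] by (simp add: c_def b_def)
  qed simp
  also have "\<dots> = 2 * (1/(pi*b)) powr p * (e powr p * exp (p * c * u^2))"
    using ep bp by (simp add: powr_divide powr_mult divide_inverse algebra_simps)
  also have "e powr p * exp (p * c * u^2) = 1"
    by (simp add: e_def powr_def flip: exp_add)
  finally show ?thesis by (simp add: b_def C_def)
qed

lemma termwise:
  fixes n :: nat and p s :: real
  assumes p: "1 < p" "p \<le> pi^2*(real n+1/2)^2 - 1" and s: "\<bar>s\<bar> < 1/2"
  shows "(cos (pi * s)/(pi*(real n+1/2+s))) powr p + (cos (pi * s)/(pi*(real n+1/2-s))) powr p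
           \<le> 2 * (1/(pi*(real n+1/2))) powr p"
proof (cases "s \<ge> 0")
  case True thus ?thesis using termwise0[OF p True] s by simp
next
  case False
  have "(cos (pi * (-s))/(pi*(real n+1/2+(-s)))) powr p + (cos (pi * (-s))/(pi*(real n+1/2-(-s)))) powr p
           \<le> 2 * (1/(pi*(real n+1/2))) powr p"
    using termwise0[OF p, of "-s"] False s by simp
  thus ?thesis by (simp add: add.commute)
qed




lemma abs_sin_shift: "\<bar>sin (pi * (y - of_int n))\<bar> = \<bar>sin (pi * y)\<bar>"
  by (simp add: right_diff_distrib sin_diff)

lemma abs_sinc_eq:
  assumes "d \<noteq> 0"
  shows "\<bar>sinc d\<bar> = \<bar>sin (pi * d)\<bar> / (pi * \<bar>d\<bar>)"
  using assms by (simp add: sinc_def abs_mult)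

lemma lambda_eq:
  fixes p :: real and N :: nat
  assumes p: "p > 1"
  shows "summable (\<lambda>k. 2 * (1/(pi*(real (N+k)+1/2))) powr p)"
    and "(\<Sum>k. 2 * (1/(pi*(real (N+k)+1/2))) powr p) = 2*(2/pi) powr p * incomplete_lambda p (real N)"
proof -
  define g where "g k = 1 / (2 * (real (Suc k) + real N) - 1) powr p" for k
  have D: "2 * (real (Suc k) + real N) - 1 = 2 * (real (N+k) + 1/2)" for k by simp
  have beta: "2 * (1/(pi*(real (N+k)+1/2))) powr p = 2*(2/pi) powr p * g k" for k
  proof -
    have "1/(pi*(real (N+k)+1/2)) = (2/pi) * (1 / (2 * (real (Suc k) + real N) - 1))"
    proof -
      have nz: "real (N+k)+1/2 > 0" by (simp add: add_pos_nonneg)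
      have gen: "1/(pi*B) = (2/pi) * (1/(2*B))" if "B \<noteq> 0" for B :: real
        using that by simp
      show ?thesis unfolding D using nz by (intro gen) simp
    qed
    hence "(1/(pi*(real (N+k)+1/2))) powr p = ((2/pi) * (1 / (2 * (real (Suc k) + real N) - 1))) powr p"
      by (simp only:)
    also have "\<dots> = (2/pi) powr p * (1 / (2 * (real (Suc k) + real N) - 1)) powr p"
      by (rule powr_mult)
    also have "(1 / (2 * (real (Suc k) + real N) - 1)) powr p = g k"
      unfolding g_def D by (simp add: powr_divide)
    finally show ?thesis by simp
  qed
  have sg: "summable g"
  proof (rule summable_comparison_test')
    have "summable (\<lambda>n. real n powr (-p))" using p by (simp add: summable_real_powr_iff)
    thus "summable (\<lambda>k. real (Suc k) powr (-p))" by (subst summable_Suc_iff)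
    fix k :: nat assume "k \<ge> 0"
    have "g k = (2 * (real (Suc k) + real N) - 1) powr (-p)"
      unfolding g_def by (simp add: powr_minus divide_inverse)
    also have "\<dots> \<le> real (Suc k) powr (-p)"
      using p by (intro powr_mono2') auto
    finally show "norm (g k) \<le> real (Suc k) powr (-p)" by (simp add: g_def)
  qed
  show "summable (\<lambda>k. 2 * (1/(pi*(real (N+k)+1/2))) powr p)"
    unfolding beta by (intro summable_mult sg)
  show "(\<Sum>k. 2 * (1/(pi*(real (N+k)+1/2))) powr p) = 2*(2/pi) powr p * incomplete_lambda p (real N)"
    unfolding beta incomplete_lambda_def g_def[symmetric] using sg by (simp add: suminf_mult)
qed




lemma main_has_sum:
  fixes N :: nat and p x :: real
  assumes p: "1 < p" "p \<le> pi^2 * (real N + 1/2)^2 - 1"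
    and t: "x - of_int \<lfloor>x\<rfloor> > 0"
  defines "s \<equiv> (x - of_int \<lfloor>x\<rfloor>) - 1/2"
  defines "T1 \<equiv> (\<lambda>k::nat. (cos (pi * s)/(pi*(real (N+k)+1/2+s))) powr p)"
  defines "T2 \<equiv> (\<lambda>k::nat. (cos (pi * s)/(pi*(real (N+k)+1/2-s))) powr p)"
  shows "((\<lambda>n::int. \<bar>sinc (x - of_int n)\<bar> powr p) has_sum (\<Sum>k. T1 k + T2 k)) {n::int. \<bar>x - of_int n\<bar> > real N}"
    and "(\<Sum>k. T1 k + T2 k) \<le> 2 * (2 / pi) powr p * incomplete_lambda p (real N)"
proof -
  define m where "m = \<lfloor>x\<rfloor>"
  define t' where "t' = x - of_int m"
  have fl: "x < of_int \<lfloor>x\<rfloor> + 1" by (metis floor_le_iff order_refl)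
  have t1: "0 < t'" "t' < 1" using t fl unfolding t'_def m_def by linarith+
  have s_def': "s = t' - 1/2" by (simp add: s_def t'_def m_def)
  have sabs: "\<bar>s\<bar> < 1/2" using t1 s_def' unfolding abs_less_iff by auto
  define f where "f n = \<bar>sinc (x - of_int n)\<bar> powr p" for n :: int
  define A where "A = {n::int. \<bar>x - of_int n\<bar> > real N}"
  define h1 where "h1 k = m - int N - int k" for k :: nat
  define h2 where "h2 k = m + int N + 1 + int k" for k :: nat
  have S: "\<bar>sin (pi * x)\<bar> = cos (pi * s)"
  proof -
    have "\<bar>sin (pi * x)\<bar> = \<bar>sin (pi * (x - of_int m))\<bar>" by (rule abs_sin_shift[symmetric])
    also have "\<dots> = sin (pi * t')" unfolding t'_def[symmetric]
    proof -
      have "0 \<le> sin (pi * t')" using t1 by (intro sin_ge_zero) auto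
      thus "\<bar>sin (pi * t')\<bar> = sin (pi * t')" by simp
    qed
    also have "\<dots> = cos (pi * s)" unfolding s_def'
      by (simp add: right_diff_distrib cos_diff)
    finally show ?thesis .
  qed
  have fval: "f n = (cos (pi * s) / (pi * \<bar>x - of_int n\<bar>)) powr p" if "x - of_int n \<noteq> 0" for n
    unfolding f_def abs_sinc_eq[OF that] abs_sin_shift S ..
  have T1eq: "f (h1 k) = T1 k" for k
  proof -
    have d: "x - of_int (h1 k) = real (N+k) + 1/2 + s" by (simp add: h1_def s_def' t'_def)
    have pos: "real (N+k) + 1/2 + s > 0" using sabs by simp
    have "f (h1 k) = (cos (pi * s) / (pi * \<bar>x - of_int (h1 k)\<bar>)) powr p"
      using pos d by (intro fval) simp
    also have "\<dots> = T1 k" unfolding d T1_def using pos by simp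
    finally show ?thesis .
  qed
  have T2eq: "f (h2 k) = T2 k" for k
  proof -
    have d: "x - of_int (h2 k) = - (real (N+k) + 1/2 - s)" by (simp add: h2_def s_def' t'_def)
    have pos: "real (N+k) + 1/2 - s > 0" using sabs by simp
    have "f (h2 k) = (cos (pi * s) / (pi * \<bar>x - of_int (h2 k)\<bar>)) powr p"
      using pos d by (intro fval) simp
    also have "\<dots> = T2 k" unfolding d T2_def using pos by simp
    finally show ?thesis .
  qed
  have Aeq: "A = range h1 \<union> range h2"
  proof (intro equalityI subsetI)
    fix n assume "n \<in> A"
    hence nA: "\<bar>x - of_int n\<bar> > real N" by (simp add: A_def)
    have xn: "x - of_int n = t' + of_int (m - n)" by (simp add: t'_def)
    show "n \<in> range h1 \<union> range h2"
    proof (cases "n \<le> m")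
      case True
      have "x - of_int n > 0" unfolding xn using True t1 by simp
      hence "t' + of_int (m - n) > real N" using nA xn by simp
      hence "real_of_int (m - n) > real_of_int (int N - 1)" using t1 by simp
      hence "m - n > int N - 1" by (simp only: of_int_less_iff)
      hence "n = h1 (nat (m - n - int N))" by (simp add: h1_def)
      thus ?thesis by blast
    next
      case False
      have "x - of_int n < 0" unfolding xn using False t1 by simp
      hence "- (t' + of_int (m - n)) > real N" using nA xn by simp
      hence "real_of_int (n - m) > real_of_int (int N)" using t1 by simp
      hence "n - m > int N" by (simp only: of_int_less_iff)
      hence "n = h2 (nat (n - m - int N - 1))" by (simp add: h2_def)
      thus ?thesis by blast
    qed
  next
    fix n assume "n \<in> range h1 \<union> range h2"
    then obtain k where "n = h1 k \<or> n = h2 k" by blast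
    thus "n \<in> A"
    proof
      assume n: "n = h1 k"
      have "x - of_int n = real (N+k) + t'" by (simp add: n h1_def t'_def)
      thus ?thesis using t1 by (simp add: A_def)
    next
      assume n: "n = h2 k"
      have "x - of_int n = - (real (N+k) + 1 - t')" by (simp add: n h2_def t'_def)
      thus ?thesis using t1 by (simp add: A_def)
    qed
  qed
  have disj: "range h1 \<inter> range h2 = {}" by (auto simp: h1_def h2_def)
  have inj1: "inj h1" by (auto simp: inj_def h1_def)
  have inj2: "inj h2" by (auto simp: inj_def h2_def)
  define beta where "beta k = 2 * (1/(pi*(real (N+k)+1/2))) powr p" for k
  have sb: "summable beta" unfolding beta_def by (rule lambda_eq(1)[OF p(1)])
  have tw: "T1 k + T2 k \<le> beta k" for k
  proof -
    have "(real N + 1/2)^2 \<le> (real (N+k) + 1/2)^2" by (intro power_mono) auto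
    hence "pi^2 * (real N + 1/2)^2 \<le> pi^2 * (real (N+k) + 1/2)^2" by (intro mult_left_mono) auto
    hence p2: "p \<le> pi^2 * (real (N+k) + 1/2)^2 - 1" using p by linarith
    show ?thesis unfolding T1_def T2_def beta_def using termwise[OF p(1) p2 sabs] by simp
  qed
  have T1nn: "T1 k \<ge> 0" and T2nn: "T2 k \<ge> 0" for k by (simp_all add: T1_def T2_def)
  have s1: "summable T1"
    by (rule summable_comparison_test'[OF sb]) (use tw T1nn T2nn in \<open>auto intro: order_trans[OF _ tw]\<close>)
  have s2: "summable T2"
    by (rule summable_comparison_test'[OF sb]) (use tw T1nn T2nn in \<open>auto intro: order_trans[OF _ tw]\<close>)
  have hs1: "(f has_sum suminf T1) (range h1)"
  proof -
    have "(T1 has_sum suminf T1) UNIV" using s1 T1nn by (intro sums_nonneg_imp_has_sum summable_sums)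
    moreover have "f \<circ> h1 = T1" using T1eq by (auto simp: o_def)
    ultimately show ?thesis using has_sum_reindex[OF inj_on_subset[OF inj1 subset_UNIV]] by metis
  qed
  have hs2: "(f has_sum suminf T2) (range h2)"
  proof -
    have "(T2 has_sum suminf T2) UNIV" using s2 T2nn by (intro sums_nonneg_imp_has_sum summable_sums)
    moreover have "f \<circ> h2 = T2" using T2eq by (auto simp: o_def)
    ultimately show ?thesis using has_sum_reindex[OF inj_on_subset[OF inj2 subset_UNIV]] by metis
  qed
  have "(f has_sum (suminf T1 + suminf T2)) (range h1 \<union> range h2)"
    by (rule has_sum_Un_disjoint[OF hs1 hs2 disj])
  moreover have "suminf T1 + suminf T2 = (\<Sum>k. T1 k + T2 k)" using s1 s2 by (simp add: suminf_add)
  ultimately show "((\<lambda>n::int. \<bar>sinc (x - of_int n)\<bar> powr p) has_sum (\<Sum>k. T1 k + T2 k)) {n::int. \<bar>x - of_int n\<bar> > real N}"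
    using Aeq unfolding A_def f_def by simp
  have "(\<Sum>k. T1 k + T2 k) \<le> suminf beta"
    using tw s1 s2 sb by (intro suminf_le) (auto intro: summable_add)
  also have "suminf beta = 2 * (2 / pi) powr p * incomplete_lambda p (real N)"
    unfolding beta_def by (rule lambda_eq(2)[OF p(1)])
  finally show "(\<Sum>k. T1 k + T2 k) \<le> 2 * (2 / pi) powr p * incomplete_lambda p (real N)" .
qed




theorem theorem4:
  fixes N :: nat and p :: real
  assumes "1 < p" and "p \<le> pi^2 * (real N + 1/2)^2 - 1"
  shows "(\<forall>x::real.
           (\<lambda>n::int. \<bar>sinc (x - of_int n)\<bar> powr p) summable_on {n::int. \<bar>x - of_int n\<bar> > real N} \<and>
           (\<Sum>\<^sub>\<infinity>n\<in>{n::int. \<bar>x - of_int n\<bar> > real N}. \<bar>sinc (x - of_int n)\<bar> powr p)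
             \<le> 2 * (2 / pi) powr p * incomplete_lambda p (real N)) \<and>
         ((\<Sum>\<^sub>\<infinity>n\<in>{n::int. \<bar>1/2 - of_int n\<bar> > real N}. \<bar>sinc (1/2 - of_int n)\<bar> powr p)
             = 2 * (2 / pi) powr p * incomplete_lambda p (real N))"
proof -
  note p = assms
  have RHSnn: "0 \<le> 2 * (2 / pi) powr p * incomplete_lambda p (real N)"
  proof -
    have "0 \<le> (\<Sum>k. 2 * (1/(pi*(real (N+k)+1/2))) powr p)"
      using lambda_eq(1)[OF p(1), of N] by (intro suminf_nonneg) auto
    thus ?thesis using lambda_eq(2)[OF p(1), of N] by simp
  qed
  have part1: "(\<lambda>n::int. \<bar>sinc (x - of_int n)\<bar> powr p) summable_on {n::int. \<bar>x - of_int n\<bar> > real N} \<and>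
           (\<Sum>\<^sub>\<infinity>n\<in>{n::int. \<bar>x - of_int n\<bar> > real N}. \<bar>sinc (x - of_int n)\<bar> powr p)
             \<le> 2 * (2 / pi) powr p * incomplete_lambda p (real N)" for x :: real
  proof (cases "x - of_int \<lfloor>x\<rfloor> > 0")
    case True
    define s where "s = (x - of_int \<lfloor>x\<rfloor>) - 1/2"
    define S where "S = (\<Sum>k. (cos (pi * s)/(pi*(real (N+k)+1/2+s))) powr p + (cos (pi * s)/(pi*(real (N+k)+1/2-s))) powr p)"
    have hs: "((\<lambda>n::int. \<bar>sinc (x - of_int n)\<bar> powr p) has_sum S) {n::int. \<bar>x - of_int n\<bar> > real N}"
      using main_has_sum(1)[OF p True] unfolding S_def s_def .
    have le: "S \<le> 2 * (2 / pi) powr p * incomplete_lambda p (real N)"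
      using main_has_sum(2)[OF p True] unfolding S_def s_def .
    show ?thesis using hs le infsumI[OF hs] unfolding summable_on_def by auto
  next
    case False
    hence x: "x = of_int \<lfloor>x\<rfloor>" using of_int_floor_le[of x] by linarith
    have z: "\<bar>sinc (x - of_int n)\<bar> powr p = 0" if "n \<in> {n::int. \<bar>x - of_int n\<bar> > real N}" for n
    proof -
      have "x - of_int n = of_int (\<lfloor>x\<rfloor> - n)" using x by simp
      hence "sin (pi * (x - of_int n)) = 0" by (simp only: sin_npi_int)
      moreover have "x - of_int n \<noteq> 0" using that by auto
      ultimately show ?thesis by (simp add: sinc_def)
    qed
    have hs: "((\<lambda>n::int. \<bar>sinc (x - of_int n)\<bar> powr p) has_sum 0) {n::int. \<bar>x - of_int n\<bar> > real N}"
      by (rule has_sum_0) (use z in blast)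
    show ?thesis using hs RHSnn infsumI[OF hs] unfolding summable_on_def by auto
  qed
  have part2: "(\<Sum>\<^sub>\<infinity>n\<in>{n::int. \<bar>1/2 - of_int n\<bar> > real N}. \<bar>sinc (1/2 - of_int n)\<bar> powr p)
             = 2 * (2 / pi) powr p * incomplete_lambda p (real N)"
  proof -
    have fl: "\<lfloor>1/2::real\<rfloor> = 0" by simp
    have pos: "(1/2::real) - of_int \<lfloor>1/2::real\<rfloor> > 0" by simp
    have "((\<lambda>n::int. \<bar>sinc (1/2 - of_int n)\<bar> powr p) has_sum
           (\<Sum>k. 2 * (1/(pi*(real (N+k)+1/2))) powr p)) {n::int. \<bar>1/2 - of_int n\<bar> > real N}"
      using main_has_sum(1)[OF p pos] unfolding fl by simp
    hence "(\<Sum>\<^sub>\<infinity>n\<in>{n::int. \<bar>1/2 - of_int n\<bar> > real N}. \<bar>sinc (1/2 - of_int n)\<bar> powr p)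
             = (\<Sum>k. 2 * (1/(pi*(real (N+k)+1/2))) powr p)" by (rule infsumI)
    also have "\<dots> = 2 * (2 / pi) powr p * incomplete_lambda p (real N)" by (rule lambda_eq(2)[OF p(1)])
    finally show ?thesis .
  qed
  show ?thesis using part1 part2 by blast
qed


end
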